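(* Let $p_1\neq p_2$ be points of $\beta\mathbb{N}\setminus\mathbb{N}$. Then the closed subspace $X=\{g\in C(\beta\mathbb{N}): g(p_1)=g(p_2)\}$ of $C(\beta\mathbb{N})$ fails the ball fixed point property.
   Context: $\beta\mathbb{N}$ is the Čech–Stone compactification of $\mathbb{N}$. $C(K)$ is the real Banach space of continuous functions on a compact space $K$ with the sup norm. A real Banach space $X$ has the ball fixed point property (BFPP) if every nonexpansive map $T\colon B_X\to B_X$ (i.e. $\|Tx-Ty\|\le\|x-y\|$) has a fixed point, where $B_X$ is the closed unit ball. *)

theory Defs
  imports "HOL-Analysis.Analysis"
begin

text \<open>The type 'k (with its topology) together with e is a Stone-Cech compactification
  of the discrete space of naturals: compact Hausdorff, e is an embedding of discrete nat
  (injective with isolated image points), the image is dense, and every bounded real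
  sequence extends to a continuous function on 'k.\<close>
definition stone_cech_nat :: "(nat \<Rightarrow> 'k::t2_space) \<Rightarrow> bool" where
  "stone_cech_nat e \<longleftrightarrow>
     compact (UNIV :: 'k set) \<and> inj e \<and> (\<forall>n. open {e n}) \<and>
     closure (range e) = UNIV \<and>
     (\<forall>f :: nat \<Rightarrow> real. bounded (range f) \<longrightarrow>
        (\<exists>g. continuous_on UNIV g \<and> (\<forall>n. g (e n) = f n)))"

definition bfpp :: "'a::real_normed_vector set \<Rightarrow> bool" where
  "bfpp S \<longleftrightarrow>
     (\<forall>T. (\<forall>x\<in>S \<inter> cball 0 1. T x \<in> S \<inter> cball 0 1) \<and>
          (\<forall>x\<in>S \<inter> cball 0 1. \<forall>y\<in>S \<inter> cball 0 1. norm (T x - T y) \<le> norm (x - y))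
          \<longrightarrow> (\<exists>x\<in>S \<inter> cball 0 1. T x = x))"

end

theory Submission
  imports Defs
begin

lemma dense_open_hit:
  assumes "closure (range (e::nat \<Rightarrow> 'k::topological_space)) = UNIV" "open V" "p \<in> V"
  shows "\<exists>n. e n \<in> V"
proof -
  have "V \<inter> closure (range e) \<noteq> {}" using assms by auto
  then have "V \<inter> range e \<noteq> {}" using open_Int_closure_eq_empty[OF assms(2)] by blast
  then show ?thesis by blast
qed

lemma dense_closed:
  fixes f :: "'k::topological_space \<Rightarrow> real"
  assumes "closure (range (e::nat \<Rightarrow> 'k)) = UNIV" "continuous_on UNIV f" "closed C"
    "\<And>n. f (e n) \<in> C"
  shows "f t \<in> C"
proof -
  have cl: "closed (f -` C)" using closed_vimage[OF assms(3,2)] .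
  have "range e \<subseteq> f -` C" using assms(4) by auto
  then have "closure (range e) \<subseteq> f -` C" using closure_minimal cl by blast
  then show ?thesis using assms(1) by auto
qed

lemma weight_exists:
  fixes e :: "nat \<Rightarrow> 'k::t2_space"
  assumes "stone_cech_nat e"
  shows "\<exists>w. continuous_on UNIV w \<and> (\<forall>n. w (e n) = 1 / real (Suc n)) \<and>
     (\<forall>t. 0 \<le> w t \<and> w t \<le> 1) \<and> (\<forall>p. p \<notin> range e \<longrightarrow> w p = 0)"
proof -
  have b: "bounded (range (\<lambda>n. 1 / real (Suc n)))"
    by (rule boundedI[where B=1]) auto
  from assms b obtain w where wc: "continuous_on UNIV w" and we: "\<And>n. w (e n) = 1 / real (Suc n)"
    unfolding stone_cech_nat_def by blast
  have dens: "closure (range e) = UNIV" using assms unfolding stone_cech_nat_def by blast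
  have "w t \<in> {0..1}" for t
    by (rule dense_closed[OF dens wc]) (auto simp: we)
  then have r: "\<forall>t. 0 \<le> w t \<and> w t \<le> 1" by auto
  have z: "w p = 0" if pn: "p \<notin> range e" for p
  proof (rule ccontr)
    assume "w p \<noteq> 0"
    then have d: "w p > 0" using r by (metis order_le_less)
    define N where "N = nat \<lceil>2 / w p\<rceil>"
    define V where "V = w -` {w p / 2 <..} - e ` {..N}"
    have "closed (e ` {..N})" by (rule finite_imp_closed) auto
    moreover have "open (w -` {w p / 2 <..})"
      using open_vimage[OF open_greaterThan wc] .
    ultimately have oV: "open V" unfolding V_def by auto
    have "p \<in> V" unfolding V_def using d pn by auto
    then obtain n where n: "e n \<in> V" using dense_open_hit[OF dens oV] by blast
    then have nN: "n > N" unfolding V_def by auto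
    have "w p / 2 < 1 / real (Suc n)" using n unfolding V_def by (auto simp: we)
    moreover have "real N \<ge> 2 / w p" unfolding N_def by linarith
    ultimately have "w p / 2 < 1 / real (Suc n)" "real (Suc n) > 2 / w p" using nN by auto
    then have "w p / 2 * real (Suc n) < 1" by (simp add: field_simps)
    moreover have "w p / 2 * real (Suc n) > w p / 2 * (2 / w p)"
      using \<open>real (Suc n) > 2 / w p\<close> d by (intro mult_strict_left_mono) auto
    ultimately show False using d by auto
  qed
  show ?thesis using wc we r z by blast
qed

lemma sep_exists:
  fixes e :: "nat \<Rightarrow> 'k::t2_space" and p1 p2 :: 'k
  assumes "stone_cech_nat e" "p1 \<noteq> p2"
  shows "\<exists>s::'k\<Rightarrow>real. continuous_on UNIV s \<and> (\<forall>t. 0 \<le> s t \<and> s t \<le> 1) \<and> s p1 = 1 \<and> s p2 = 0"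
proof -
  obtain U1 U2 where U: "open U1" "open U2" "p1 \<in> U1" "p2 \<in> U2" "U1 \<inter> U2 = {}"
    using hausdorff[OF assms(2)] by blast
  define f where "f n = (if e n \<in> U1 then 1 else 0::real)" for n
  have b: "bounded (range f)" by (rule boundedI[where B=1]) (auto simp: f_def)
  from assms b obtain s where sc: "continuous_on UNIV s" and se: "\<And>n. s (e n) = f n"
    unfolding stone_cech_nat_def by blast
  have dens: "closure (range e) = UNIV" using assms unfolding stone_cech_nat_def by blast
  have "s t \<in> {0..1}" for t
    by (rule dense_closed[OF dens sc]) (auto simp: se f_def)
  then have r: "\<forall>t. 0 \<le> s t \<and> s t \<le> 1" by auto
  have s1: "s p1 = 1"
  proof (rule ccontr)
    assume a: "s p1 \<noteq> 1"
    have "open (s -` (- {1}))" using open_vimage[OF open_Compl[OF closed_singleton] sc] .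
    then have "open (U1 \<inter> s -` (- {1}))" using U by auto
    moreover have "p1 \<in> U1 \<inter> s -` (- {1})" using a U by auto
    ultimately obtain n where "e n \<in> U1 \<inter> s -` (- {1})" using dense_open_hit[OF dens] by blast
    then show False by (auto simp: se f_def)
  qed
  have s2: "s p2 = 0"
  proof (rule ccontr)
    assume a: "s p2 \<noteq> 0"
    have "open (s -` (- {0}))" using open_vimage[OF open_Compl[OF closed_singleton] sc] .
    then have "open (U2 \<inter> s -` (- {0}))" using U by auto
    moreover have "p2 \<in> U2 \<inter> s -` (- {0})" using a U by auto
    ultimately obtain n where "e n \<in> U2 \<inter> s -` (- {0})" using dense_open_hit[OF dens] by blast
    then show False using U(5) by (auto simp: se f_def split: if_splits)
  qed
  show ?thesis using sc r s1 s2 by blast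
qed

theorem mainTheorem5:
  fixes e :: "nat \<Rightarrow> 'k::t2_space" and p1 p2 :: 'k
  assumes "stone_cech_nat e"
    and "p1 \<notin> range e" and "p2 \<notin> range e" and "p1 \<noteq> p2"
  shows "\<not> bfpp {g :: ('k \<Rightarrow>\<^sub>C real). apply_bcontfun g p1 = apply_bcontfun g p2}"
proof -
  obtain w where wc: "continuous_on UNIV w" and we: "\<And>n. w (e n) = 1 / real (Suc n)"
    and wr: "\<And>t. 0 \<le> w t \<and> w t \<le> 1" and wz: "\<And>p. p \<notin> range e \<Longrightarrow> w p = 0"
    using weight_exists[OF assms(1)] by blast
  obtain s :: "'k \<Rightarrow> real" where sc: "continuous_on UNIV s" and sr: "\<And>t. 0 \<le> s t \<and> s t \<le> 1"
    and s1: "s p1 = 1" and s2: "s p2 = 0"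
    using sep_exists[OF assms(1) assms(4)] by blast
  have dens: "closure (range e) = UNIV" using assms(1) unfolding stone_cech_nat_def by blast
  define S where "S = {g :: ('k \<Rightarrow>\<^sub>C real). apply_bcontfun g p1 = apply_bcontfun g p2}"
  define F where "F g = (\<lambda>t. (1 - w t) * apply_bcontfun g t + w t * s t)" for g :: "'k \<Rightarrow>\<^sub>C real"
  have bnd: "\<bar>F g t\<bar> \<le> norm g + 1" for g t
  proof -
    have "\<bar>F g t\<bar> \<le> (1 - w t) * \<bar>g t\<bar> + w t * \<bar>s t\<bar>"
      unfolding F_def using wr[of t] abs_triangle_ineq[of "(1 - w t) * g t" "w t * s t"]
        by (simp add: abs_mult)
    also have "\<dots> \<le> 1 * norm g + 1 * 1"
      using wr[of t] sr[of t] norm_bounded[of g t]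
      by (intro add_mono mult_mono) auto
    finally show ?thesis by simp
  qed
  have Fin: "F g \<in> bcontfun" for g
    by (rule bcontfun_normI[where b="norm g + 1"])
       (auto simp: F_def intro!: continuous_intros wc sc bnd[unfolded F_def])
  have FT: "apply_bcontfun (Bcontfun (F g)) = F g" for g
    using Fin Bcontfun_inverse by blast
  define T where "T g = Bcontfun (F g)" for g
  have TT: "apply_bcontfun (T g) t = F g t" for g t unfolding T_def FT ..
  have map: "T g \<in> S \<inter> cball 0 1" if g: "g \<in> S \<inter> cball 0 1" for g
  proof -
    have "T g \<in> S" using g unfolding S_def by (simp add: TT F_def wz assms(2,3))
    moreover have "norm (T g) \<le> 1"
    proof (rule norm_bound)
      fix t
      have ng: "\<bar>g t\<bar> \<le> 1" using g norm_bounded[of g t] by auto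
      have "\<bar>F g t\<bar> \<le> (1 - w t) * \<bar>g t\<bar> + w t * \<bar>s t\<bar>"
        unfolding F_def using wr[of t] abs_triangle_ineq[of "(1 - w t) * g t" "w t * s t"]
        by (simp add: abs_mult)
      also have "\<dots> \<le> (1 - w t) * 1 + w t * 1"
        using wr[of t] sr[of t] ng by (intro add_mono mult_left_mono) auto
      finally show "norm (apply_bcontfun (T g) t) \<le> 1" by (simp add: TT)
    qed
    ultimately show ?thesis by auto
  qed
  have nonexp: "norm (T x - T y) \<le> norm (x - y)" for x y
  proof (rule norm_bound)
    fix t
    have "apply_bcontfun (T x - T y) t = (1 - w t) * (x t - y t)"
      by (simp add: TT F_def algebra_simps)
    then have "norm (apply_bcontfun (T x - T y) t) = (1 - w t) * \<bar>x t - y t\<bar>"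
      using wr[of t] by (simp add: abs_mult)
    also have "\<dots> \<le> 1 * \<bar>x t - y t\<bar>" using wr[of t] by (intro mult_right_mono) auto
    also have "\<dots> \<le> norm (x - y)" using norm_bounded[of "x - y" t] by simp
    finally show "norm (apply_bcontfun (T x - T y) t) \<le> norm (x - y)" .
  qed
  have nofix: "T g \<noteq> g" if "g \<in> S" for g
  proof
    assume fx: "T g = g"
    have eq: "g (e n) = s (e n)" for n
    proof -
      have "F g (e n) = g (e n)" using fx TT by metis
      then have "w (e n) * (s (e n) - g (e n)) = 0" unfolding F_def by (simp add: algebra_simps)
      moreover have "w (e n) \<noteq> 0" by (simp add: we)
      ultimately show ?thesis by simp
    qed
    have "(\<lambda>t. g t - s t) t \<in> {0}" for t
      by (rule dense_closed[OF dens]) (auto intro!: continuous_intros sc simp: eq)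
    then have "g p1 = s p1" "g p2 = s p2" by auto
    then show False using that s1 s2 unfolding S_def by simp
  qed
  have "bfpp S \<Longrightarrow> False"
  proof -
    assume "bfpp S"
    then have H: "(\<forall>x\<in>S \<inter> cball 0 1. T x \<in> S \<inter> cball 0 1) \<and>
          (\<forall>x\<in>S \<inter> cball 0 1. \<forall>y\<in>S \<inter> cball 0 1. norm (T x - T y) \<le> norm (x - y))
          \<longrightarrow> (\<exists>x\<in>S \<inter> cball 0 1. T x = x)"
      unfolding bfpp_def by (rule spec)
    have "\<exists>x\<in>S \<inter> cball 0 1. T x = x"
      using H map nonexp by blast
    then show False using nofix by blast
  qed
  then show ?thesis unfolding S_def by blast
qed

end
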